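(* A bijection $\kappa:\mathcal G\to\mathcal G$ is an automorphism of the Grassmann graph $(\mathcal G,\sim)$ (i.e. $X\sim Y\iff X^\kappa\sim Y^\kappa$ for all $X,Y\in\mathcal G$) if and only if it is a collineation of the Grassmann space $(\mathcal G,\mathfrak P)$ (i.e. $\kappa$ and $\kappa^{-1}$ map pencils onto pencils).
   Context: $K$ is a (not necessarily commutative) field and $V$ is a left vector space over $K$ of arbitrary (possibly infinite) dimension with $\dim V>2$. $\mathcal G:=\{X\le V\mid X\cong V/X\}$, assumed nonempty. $X,Y\in\mathcal G$ are adjacent ($X\sim Y$) if $\dim((X+Y)/X)=\dim((X+Y)/Y)=1$. A pencil is a set $\mathcal G[M,N]:=\{X\in\mathcal G\mid M<X<N\}$, where $M,N\le V$ are subspaces such that there exists $X\in\mathcal G$ with $M\le X\le N$ and $\dim(X/M)=\dim(N/X)=1$; $\mathfrak P$ denotes the set of all pencils. *)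

theory Defs
  imports Main
begin

text \<open>A left vector space over a (possibly non-commutative) field, i.e. a division ring 'k,
  with underlying additive group 'v (the whole type is V) and scalar multiplication sm.\<close>

definition left_vector_space :: "('k::division_ring \<Rightarrow> 'v::ab_group_add \<Rightarrow> 'v) \<Rightarrow> bool" where
  "left_vector_space sm \<longleftrightarrow>
     (\<forall>a x y. sm a (x + y) = sm a x + sm a y) \<and>
     (\<forall>a b x. sm (a + b) x = sm a x + sm b x) \<and>
     (\<forall>a b x. sm (a * b) x = sm a (sm b x)) \<and>
     (\<forall>x. sm 1 x = x)"

definition dim_gt_2 :: "('k::division_ring \<Rightarrow> 'v::ab_group_add \<Rightarrow> 'v) \<Rightarrow> bool" where
  "dim_gt_2 sm \<longleftrightarrow> (\<exists>u v w. \<forall>a b c. sm a u + sm b v + sm c w = 0 \<longrightarrow> a = 0 \<and> b = 0 \<and> c = 0)"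

definition subspace :: "('k::division_ring \<Rightarrow> 'v::ab_group_add \<Rightarrow> 'v) \<Rightarrow> 'v set \<Rightarrow> bool" where
  "subspace sm X \<longleftrightarrow> 0 \<in> X \<and> (\<forall>x\<in>X. \<forall>y\<in>X. x + y \<in> X) \<and> (\<forall>a. \<forall>x\<in>X. sm a x \<in> X)"

definition coset :: "'v::ab_group_add \<Rightarrow> 'v set \<Rightarrow> 'v set" where
  "coset v X = {v + x | x. x \<in> X}"

text \<open>X is isomorphic (as a left K-vector space) to the quotient V/X: there is a bijection f from
  X onto the set of cosets of X which is linear w.r.t. the quotient operations
  (v+X) + (w+X) = (v+w)+X and a(v+X) = (av)+X.\<close>
definition iso_quot :: "('k::division_ring \<Rightarrow> 'v::ab_group_add \<Rightarrow> 'v) \<Rightarrow> 'v set \<Rightarrow> bool" where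
  "iso_quot sm X \<longleftrightarrow> (\<exists>f. bij_betw f X {coset v X | v. True} \<and>
      (\<forall>x\<in>X. \<forall>y\<in>X. \<forall>u\<in>f x. \<forall>w\<in>f y. f (x + y) = coset (u + w) X) \<and>
      (\<forall>a. \<forall>x\<in>X. \<forall>u\<in>f x. f (sm a x) = coset (sm a u) X))"

definition quot_dim1 :: "('k::division_ring \<Rightarrow> 'v::ab_group_add \<Rightarrow> 'v) \<Rightarrow> 'v set \<Rightarrow> 'v set \<Rightarrow> bool" where
  "quot_dim1 sm A B \<longleftrightarrow> B \<subseteq> A \<and> (\<exists>v\<in>A. v \<notin> B \<and> A = {b + sm a v | b a. b \<in> B})"

definition sum_space :: "'v::ab_group_add set \<Rightarrow> 'v set \<Rightarrow> 'v set" where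
  "sum_space X Y = {x + y | x y. x \<in> X \<and> y \<in> Y}"

definition Grass :: "('k::division_ring \<Rightarrow> 'v::ab_group_add \<Rightarrow> 'v) \<Rightarrow> 'v set set" where
  "Grass sm = {X. subspace sm X \<and> iso_quot sm X}"

definition adjacent :: "('k::division_ring \<Rightarrow> 'v::ab_group_add \<Rightarrow> 'v) \<Rightarrow> 'v set \<Rightarrow> 'v set \<Rightarrow> bool" where
  "adjacent sm X Y \<longleftrightarrow> quot_dim1 sm (sum_space X Y) X \<and> quot_dim1 sm (sum_space X Y) Y"

definition pencil_set :: "('k::division_ring \<Rightarrow> 'v::ab_group_add \<Rightarrow> 'v) \<Rightarrow> 'v set \<Rightarrow> 'v set \<Rightarrow> 'v set set" where
  "pencil_set sm M N = {X \<in> Grass sm. M \<subset> X \<and> X \<subset> N}"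

definition pencils :: "('k::division_ring \<Rightarrow> 'v::ab_group_add \<Rightarrow> 'v) \<Rightarrow> 'v set set set" where
  "pencils sm = {pencil_set sm M N | M N. subspace sm M \<and> subspace sm N \<and>
      (\<exists>X\<in>Grass sm. M \<subseteq> X \<and> X \<subseteq> N \<and> quot_dim1 sm X M \<and> quot_dim1 sm N X)}"

end

theory Submission
  imports Defs
begin


locale lvs =
  fixes sm :: "'k::division_ring \<Rightarrow> 'v::ab_group_add \<Rightarrow> 'v"
  assumes lvs: "left_vector_space sm"
begin

lemma add_r: "sm a (x + y) = sm a x + sm a y" using lvs unfolding left_vector_space_def by blast
lemma add_l: "sm (a + b) x = sm a x + sm b x" using lvs unfolding left_vector_space_def by blast
lemma mult_l: "sm (a * b) x = sm a (sm b x)" using lvs unfolding left_vector_space_def by blast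
lemma one_l[simp]: "sm 1 x = x" using lvs unfolding left_vector_space_def by blast

lemma zero_l[simp]: "sm 0 x = 0"
  using add_l[of 0 0 x] by simp
lemma zero_r[simp]: "sm a 0 = 0"
  using add_r[of a 0 0] by simp
lemma neg_l: "sm (- a) x = - sm a x"
  using add_l[of a "-a" x] by (simp add: eq_neg_iff_add_eq_0 add.commute)
lemma neg_r: "sm a (- x) = - sm a x"
  using add_r[of a x "-x"] by (simp add: eq_neg_iff_add_eq_0 add.commute)
lemma diff_l: "sm (a - b) x = sm a x - sm b x"
  using add_l[of a "-b" x] neg_l by simp
lemma diff_r: "sm a (x - y) = sm a x - sm a y"
  using add_r[of a x "-y"] neg_r by simp
lemma inv_cancel: "a \<noteq> 0 \<Longrightarrow> sm (inverse a) (sm a x) = x"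
  by (simp add: mult_l[symmetric])
lemma sm_eq0: "sm a x = 0 \<Longrightarrow> a \<noteq> 0 \<Longrightarrow> x = 0"
  using inv_cancel[of a x] by simp

definition span1 :: "'v set \<Rightarrow> 'v \<Rightarrow> 'v set" where
  "span1 B v = {b + sm a v | b a. b \<in> B}"

lemma quot_dim1_alt: "quot_dim1 sm A B \<longleftrightarrow> B \<subseteq> A \<and> (\<exists>v\<in>A. v \<notin> B \<and> A = span1 B v)"
  unfolding quot_dim1_def span1_def by simp

lemma sub0: "subspace sm X \<Longrightarrow> 0 \<in> X" unfolding subspace_def by blast
lemma subadd: "subspace sm X \<Longrightarrow> x \<in> X \<Longrightarrow> y \<in> X \<Longrightarrow> x + y \<in> X" unfolding subspace_def by blast
lemma subsm: "subspace sm X \<Longrightarrow> x \<in> X \<Longrightarrow> sm a x \<in> X" unfolding subspace_def by blast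
lemma subneg: "subspace sm X \<Longrightarrow> x \<in> X \<Longrightarrow> - x \<in> X"
  using subsm[of X x "-1"] neg_l[of 1 x] by simp
lemma subdiff: "subspace sm X \<Longrightarrow> x \<in> X \<Longrightarrow> y \<in> X \<Longrightarrow> x - y \<in> X"
  using subadd[of X x "-y"] subneg[of X y] by simp
lemma subdiff_mem: "subspace sm X \<Longrightarrow> x + y \<in> X \<Longrightarrow> x \<in> X \<Longrightarrow> y \<in> X"
  using subdiff[of X "x+y" x] by simp
lemma subdiff_mem2: "subspace sm X \<Longrightarrow> x + y \<in> X \<Longrightarrow> y \<in> X \<Longrightarrow> x \<in> X"
  using subdiff[of X "x+y" y] by simp

lemma sub_inter: "subspace sm X \<Longrightarrow> subspace sm Y \<Longrightarrow> subspace sm (X \<inter> Y)"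
  unfolding subspace_def by blast
lemma sub_univ: "subspace sm UNIV" unfolding subspace_def by blast
lemma sub_zero: "subspace sm {0}" unfolding subspace_def by simp

lemma sub_sum: "subspace sm X \<Longrightarrow> subspace sm Y \<Longrightarrow> subspace sm (sum_space X Y)"
proof -
  assume X: "subspace sm X" and Y: "subspace sm Y"
  have "0 \<in> sum_space X Y" unfolding sum_space_def using sub0[OF X] sub0[OF Y]
    by (intro CollectI exI[of _ 0]) simp
  moreover have "\<forall>u\<in>sum_space X Y. \<forall>w\<in>sum_space X Y. u + w \<in> sum_space X Y"
  proof (intro ballI)
    fix u w assume "u \<in> sum_space X Y" "w \<in> sum_space X Y"
    then obtain x1 y1 x2 y2 where "u = x1 + y1" "w = x2 + y2" "x1 \<in> X" "x2 \<in> X" "y1 \<in> Y" "y2 \<in> Y"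
      unfolding sum_space_def by blast
    then show "u + w \<in> sum_space X Y" unfolding sum_space_def
      using subadd[OF X, of x1 x2] subadd[OF Y, of y1 y2]
      by (intro CollectI exI[of _ "x1+x2"] exI[of _ "y1+y2"]) (simp add: algebra_simps)
  qed
  moreover have "\<forall>a. \<forall>u\<in>sum_space X Y. sm a u \<in> sum_space X Y"
  proof (intro allI ballI)
    fix a u assume "u \<in> sum_space X Y"
    then obtain x1 y1 where "u = x1 + y1" "x1 \<in> X" "y1 \<in> Y"
      unfolding sum_space_def by blast
    then show "sm a u \<in> sum_space X Y" unfolding sum_space_def
      using subsm[OF X, of x1 a] subsm[OF Y, of y1 a]
      by (intro CollectI exI[of _ "sm a x1"] exI[of _ "sm a y1"]) (simp add: add_r)
  qed
  ultimately show ?thesis unfolding subspace_def by blast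
qed

lemma sum_comm1: "sum_space X Y \<subseteq> sum_space Y X"
proof
  fix z assume "z \<in> sum_space X Y"
  then obtain x y where "z = x + y" "x \<in> X" "y \<in> Y" unfolding sum_space_def by blast
  then show "z \<in> sum_space Y X" unfolding sum_space_def
    by (intro CollectI exI[of _ y] exI[of _ x]) (simp add: add.commute)
qed
lemma sum_comm: "sum_space X Y = sum_space Y X"
  using sum_comm1 by blast

lemma sum_ub1: "subspace sm Y \<Longrightarrow> X \<subseteq> sum_space X Y"
  unfolding sum_space_def using sub0 by force
lemma sum_ub2: "subspace sm X \<Longrightarrow> Y \<subseteq> sum_space X Y"
  unfolding sum_space_def using sub0 by force
lemma sum_lub: "subspace sm Z \<Longrightarrow> X \<subseteq> Z \<Longrightarrow> Y \<subseteq> Z \<Longrightarrow> sum_space X Y \<subseteq> Z"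
  unfolding sum_space_def using subadd by blast
lemma sum_same: "subspace sm X \<Longrightarrow> sum_space X X = X"
  using sum_ub1 sum_lub by blast

lemma span1_sub: "subspace sm B \<Longrightarrow> subspace sm (span1 B v)"
proof -
  assume B: "subspace sm B"
  have "0 \<in> span1 B v" unfolding span1_def using sub0[OF B]
    by (intro CollectI exI[of _ 0] exI[of _ 0]) simp
  moreover have "\<forall>u\<in>span1 B v. \<forall>w\<in>span1 B v. u + w \<in> span1 B v"
  proof (intro ballI)
    fix u w assume "u \<in> span1 B v" "w \<in> span1 B v"
    then obtain b1 a1 b2 a2 where "u = b1 + sm a1 v" "w = b2 + sm a2 v" "b1 \<in> B" "b2 \<in> B"
      unfolding span1_def by blast
    then show "u + w \<in> span1 B v" unfolding span1_def
      using subadd[OF B, of b1 b2]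
      by (intro CollectI exI[of _ "b1+b2"] exI[of _ "a1+a2"]) (simp add: algebra_simps add_l)
  qed
  moreover have "\<forall>a. \<forall>u\<in>span1 B v. sm a u \<in> span1 B v"
  proof (intro allI ballI)
    fix a u assume "u \<in> span1 B v"
    then obtain b1 a1 where "u = b1 + sm a1 v" "b1 \<in> B"
      unfolding span1_def by blast
    then show "sm a u \<in> span1 B v" unfolding span1_def
      using subsm[OF B, of b1 a]
      by (intro CollectI exI[of _ "sm a b1"] exI[of _ "a*a1"]) (simp add: add_r mult_l)
  qed
  ultimately show ?thesis unfolding subspace_def by blast
qed

lemma span1_mem: "b \<in> B \<Longrightarrow> b + sm a v \<in> span1 B v"
  unfolding span1_def by blast
lemma span1_base: "B \<subseteq> span1 B v"
  using span1_mem[of _ B 0 v] by auto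
lemma span1_vec: "subspace sm B \<Longrightarrow> v \<in> span1 B v"
  using span1_mem[of 0 B 1 v] sub0 by auto
lemma span1_lub: "subspace sm Z \<Longrightarrow> B \<subseteq> Z \<Longrightarrow> v \<in> Z \<Longrightarrow> span1 B v \<subseteq> Z"
  unfolding span1_def using subadd subsm by blast
lemma span1_in: "subspace sm B \<Longrightarrow> v \<in> B \<Longrightarrow> span1 B v = B"
  using span1_lub span1_base by blast

lemma span1_exch:
  assumes B: "subspace sm B" and v: "v \<in> span1 B u" "v \<notin> B"
  shows "span1 B v = span1 B u"
proof -
  obtain b a where vb: "v = b + sm a u" "b \<in> B" using v unfolding span1_def by blast
  have a: "a \<noteq> 0" using vb v B by auto
  have u: "u = sm (inverse a) v - sm (inverse a) b"
    using vb a by (simp add: diff_r[symmetric] inv_cancel)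
  have "u \<in> span1 B v" unfolding u
    using span1_mem[of "- sm (inverse a) b" B "inverse a" v] subneg subsm B vb
    by (simp add: add.commute)
  then have "span1 B u \<subseteq> span1 B v" using span1_lub span1_sub span1_base B by metis
  moreover have "span1 B v \<subseteq> span1 B u" using span1_lub span1_sub span1_base B v by metis
  ultimately show ?thesis by blast
qed

lemma quot_gen:
  assumes B: "subspace sm B" and q: "quot_dim1 sm A B" and v: "v \<in> A" "v \<notin> B"
  shows "A = span1 B v"
proof -
  obtain u where "A = span1 B u" using q unfolding quot_dim1_alt by blast
  then show ?thesis using span1_exch[OF B, of v u] v by simp
qed

lemma quot_span1: "subspace sm B \<Longrightarrow> v \<notin> B \<Longrightarrow> quot_dim1 sm (span1 B v) B"
  unfolding quot_dim1_alt using span1_base span1_vec by blast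

lemma quot_between:
  assumes B: "subspace sm B" and C: "subspace sm C" and q: "quot_dim1 sm A B"
    and "B \<subseteq> C" "C \<subseteq> A"
  shows "C = B \<or> C = A"
proof (cases "C = B")
  case False
  then obtain c where "c \<in> C" "c \<notin> B" using assms by blast
  then have "A = span1 B c" using quot_gen[OF B q] assms by blast
  then have "A \<subseteq> C" using span1_lub[OF C] \<open>c\<in>C\<close> assms by blast
  then show ?thesis using assms by blast
qed simp

lemma quot_sub: "quot_dim1 sm A B \<Longrightarrow> B \<subseteq> A" unfolding quot_dim1_def by blast
lemma quot_ne: "quot_dim1 sm A B \<Longrightarrow> A \<noteq> B" unfolding quot_dim1_def by blast

lemma sum_span1: "subspace sm A \<Longrightarrow> subspace sm B \<Longrightarrow> B \<subseteq> A \<Longrightarrow> sum_space A (span1 B z) = span1 A z"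
proof -
  assume A: "subspace sm A" and B: "subspace sm B" and BA: "B \<subseteq> A"
  have 1: "subspace sm (span1 A z)" "subspace sm (span1 B z)" using A B span1_sub by auto
  have "span1 B z \<subseteq> span1 A z"
    by (rule span1_lub[OF 1(1)]) (use BA span1_base[of A z] span1_vec[OF A] in auto)
  then have "sum_space A (span1 B z) \<subseteq> span1 A z"
    using sum_lub[OF 1(1)] span1_base by blast
  moreover have "span1 A z \<subseteq> sum_space A (span1 B z)"
    apply (rule span1_lub) using sub_sum[OF A 1(2)] apply simp
    using sum_ub1[OF 1(2)] apply simp
    using sum_ub2[OF A, of "span1 B z"] span1_vec[OF B] by blast
  ultimately show ?thesis by blast
qed

lemma span1_comm: "subspace sm S \<Longrightarrow> span1 (span1 S p) q = span1 (span1 S q) p"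
proof -
  assume S: "subspace sm S"
  have "span1 (span1 S p) q = sum_space (span1 S p) (span1 S q)"
    using sum_span1[of "span1 S p" S q] S span1_sub span1_base by simp
  also have "\<dots> = sum_space (span1 S q) (span1 S p)" by (rule sum_comm)
  also have "\<dots> = span1 (span1 S q) p"
    using sum_span1[of "span1 S q" S p] S span1_sub span1_base by simp
  finally show ?thesis .
qed

end


lemma solve1: "\<exists>\<alpha> \<beta>::'k::division_ring. (\<alpha> \<noteq> 0 \<or> \<beta> \<noteq> 0) \<and> \<alpha> * x + \<beta> * y = 0"
proof (cases "x = 0")
  case True then show ?thesis by - (rule exI[of _ "1::'k"], rule exI[of _ "0::'k"], simp)
next
  case False then show ?thesis
    by - (rule exI[of _ "- (y * inverse x)"], rule exI[of _ "1::'k"], simp add: mult.assoc)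
qed

lemma solve2: "\<exists>\<alpha> \<beta> \<gamma>::'k::division_ring. (\<alpha> \<noteq> 0 \<or> \<beta> \<noteq> 0 \<or> \<gamma> \<noteq> 0) \<and>
   \<alpha>*a1+\<beta>*a2+\<gamma>*a3 = 0 \<and> \<alpha>*b1+\<beta>*b2+\<gamma>*b3 = 0"
proof (cases "a1 = 0")
  case False
  obtain \<beta> \<gamma> where bg: "\<beta> \<noteq> 0 \<or> \<gamma> \<noteq> 0"
    "\<beta> * (b2 - a2 * inverse a1 * b1) + \<gamma> * (b3 - a3 * inverse a1 * b1) = 0"
    using solve1 by blast
  define \<alpha> where "\<alpha> = -(\<beta>*a2+\<gamma>*a3)*inverse a1"
  have 1: "\<alpha>*a1 = -(\<beta>*a2+\<gamma>*a3)" unfolding \<alpha>_def using False by (simp add: mult.assoc)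
  have 2: "\<alpha>*b1+\<beta>*b2+\<gamma>*b3 = \<beta> * (b2 - a2 * inverse a1 * b1) + \<gamma> * (b3 - a3 * inverse a1 * b1)"
    unfolding \<alpha>_def by (simp add: algebra_simps)
  show ?thesis using bg 1 2 by - (rule exI[of _ \<alpha>], rule exI[of _ \<beta>], rule exI[of _ \<gamma>], simp)
next
  case True
  show ?thesis
  proof (cases "b1 = 0")
    case True
    then show ?thesis using \<open>a1 = 0\<close> by - (rule exI[of _ "1::'k"], rule exI[of _ "0::'k"], rule exI[of _ "0::'k"], simp)
  next
    case False
    obtain \<beta> \<gamma> where bg: "\<beta> \<noteq> 0 \<or> \<gamma> \<noteq> 0" "\<beta> * a2 + \<gamma> * a3 = 0"
      using solve1 by blast
    define \<alpha> where "\<alpha> = -(\<beta>*b2+\<gamma>*b3)*inverse b1"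
    have 1: "\<alpha>*b1 = -(\<beta>*b2+\<gamma>*b3)" unfolding \<alpha>_def using False by (simp add: mult.assoc)
    have 2: "\<alpha>*b1+\<beta>*b2+\<gamma>*b3 = 0" using 1 by (simp add: add.assoc)
    show ?thesis using bg 2 \<open>a1 = 0\<close> by - (rule exI[of _ \<alpha>], rule exI[of _ \<beta>], rule exI[of _ \<gamma>], simp)
  qed
qed

context lvs begin

lemma not_2dim:
  assumes d: "dim_gt_2 sm" and sp: "\<forall>v. \<exists>a b. v = sm a p + sm b q"
  shows False
proof -
  obtain u v w where ind: "\<forall>a b c. sm a u + sm b v + sm c w = 0 \<longrightarrow> a = 0 \<and> b = 0 \<and> c = 0"
    using d unfolding dim_gt_2_def by blast
  obtain a1 b1 a2 b2 a3 b3 where e: "u = sm a1 p + sm b1 q" "v = sm a2 p + sm b2 q" "w = sm a3 p + sm b3 q"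
    using sp by meson
  obtain \<alpha> \<beta> \<gamma> where s: "\<alpha> \<noteq> 0 \<or> \<beta> \<noteq> 0 \<or> \<gamma> \<noteq> 0"
   "\<alpha>*a1+\<beta>*a2+\<gamma>*a3 = 0" "\<alpha>*b1+\<beta>*b2+\<gamma>*b3 = 0" using solve2 by blast
  have "sm \<alpha> u + sm \<beta> v + sm \<gamma> w = sm (\<alpha>*a1+\<beta>*a2+\<gamma>*a3) p + sm (\<alpha>*b1+\<beta>*b2+\<gamma>*b3) q"
    unfolding e by (simp add: add_l add_r mult_l add_ac)
  then have "sm \<alpha> u + sm \<beta> v + sm \<gamma> w = 0" using s by simp
  then show False using ind s by blast
qed

lemma complement:
  assumes A: "subspace sm A" and B: "subspace sm B" and AB: "A \<subseteq> B"
  shows "\<exists>C. subspace sm C \<and> C \<subseteq> B \<and> A \<inter> C = {0} \<and> sum_space A C = B"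
proof -
  define \<A> where "\<A> = {C. subspace sm C \<and> C \<subseteq> B \<and> A \<inter> C = {0}}"
  have ne: "\<A> \<noteq> {}" unfolding \<A>_def using sub_zero sub0[OF A] sub0[OF B] by blast
  have "\<exists>M\<in>\<A>. \<forall>X\<in>\<A>. M \<subseteq> X \<longrightarrow> X = M"
  proof (rule subset_Zorn_nonempty[OF ne])
    fix \<C> assume Cne: "\<C> \<noteq> {}" and ch: "subset.chain \<A> \<C>"
    have CA: "\<C> \<subseteq> \<A>" and tot: "\<forall>x\<in>\<C>. \<forall>y\<in>\<C>. x \<subseteq> y \<or> y \<subseteq> x"
      using ch unfolding subset.chain_def by auto
    have sC: "\<And>C. C \<in> \<C> \<Longrightarrow> subspace sm C" using CA unfolding \<A>_def by blast
    have "subspace sm (\<Union>\<C>)"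
      unfolding subspace_def
    proof (intro conjI ballI allI)
      show "0 \<in> \<Union>\<C>" using Cne sC sub0 by blast
    next
      fix x y assume "x \<in> \<Union>\<C>" "y \<in> \<Union>\<C>"
      then obtain C1 C2 where "x \<in> C1" "y \<in> C2" "C1 \<in> \<C>" "C2 \<in> \<C>" by blast
      then show "x + y \<in> \<Union>\<C>" using tot sC subadd by (metis UnionI subsetD)
    next
      fix a x assume "x \<in> \<Union>\<C>"
      then show "sm a x \<in> \<Union>\<C>" using sC subsm by blast
    qed
    moreover have "\<Union>\<C> \<subseteq> B" using CA unfolding \<A>_def by blast
    moreover have "A \<inter> \<Union>\<C> = {0}" using CA Cne sub0[OF A] unfolding \<A>_def by blast
    ultimately show "\<Union>\<C> \<in> \<A>" unfolding \<A>_def by blast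
  qed
  then obtain C where C: "C \<in> \<A>" and max: "\<forall>X\<in>\<A>. C \<subseteq> X \<longrightarrow> X = C" by blast
  have sC: "subspace sm C" "C \<subseteq> B" "A \<inter> C = {0}" using C unfolding \<A>_def by auto
  have "B \<subseteq> sum_space A C"
  proof
    fix b assume bB: "b \<in> B"
    show "b \<in> sum_space A C"
    proof (rule ccontr)
      assume nb: "b \<notin> sum_space A C"
      have "span1 C b \<in> \<A>" unfolding \<A>_def
      proof (intro CollectI conjI)
        show "subspace sm (span1 C b)" using span1_sub sC by blast
        show "span1 C b \<subseteq> B" using span1_lub[OF B] sC bB by blast
        show "A \<inter> span1 C b = {0}"
        proof
          show "{0} \<subseteq> A \<inter> span1 C b" using sub0[OF A] sub0[OF span1_sub[OF sC(1)]] by blast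
          show "A \<inter> span1 C b \<subseteq> {0}"
          proof
            fix x assume "x \<in> A \<inter> span1 C b"
            then obtain c t where x: "x \<in> A" "x = c + sm t b" "c \<in> C" unfolding span1_def by blast
            show "x \<in> {0}"
            proof (cases "t = 0")
              case True then show ?thesis using x sC by auto
            next
              case False
              have "b = sm (inverse t) x + (- sm (inverse t) c)"
                using x False by (simp add: add_r inv_cancel)
              moreover have "sm (inverse t) x \<in> A" "- sm (inverse t) c \<in> C"
                using x subsm[OF A] subneg[OF sC(1)] subsm[OF sC(1)] by auto
              ultimately have "b \<in> sum_space A C" unfolding sum_space_def by blast
              then show ?thesis using nb by blast
            qed
          qed
        qed
      qed
      then have "span1 C b = C" using max span1_base by blast
      then have "b \<in> C" using span1_vec[OF sC(1)] by blast
      then show False using nb sum_ub2[OF A] by blast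
    qed
  qed
  moreover have "sum_space A C \<subseteq> B" using sum_lub[OF B] AB sC by blast
  ultimately show ?thesis using sC by blast
qed

lemma sum_sub_eq: "subspace sm X \<Longrightarrow> subspace sm Y \<Longrightarrow> X \<subseteq> Y \<Longrightarrow> sum_space X Y = Y"
  by (rule antisym[OF sum_lub[of Y X Y] sum_ub2[of X Y]]) auto

lemma quot_sum_inter:
  assumes X: "subspace sm X" and Y: "subspace sm Y" and q: "quot_dim1 sm (sum_space X Y) X"
  shows "quot_dim1 sm Y (X \<inter> Y)"
proof -
  have "\<not> Y \<subseteq> X"
  proof
    assume "Y \<subseteq> X"
    then have "sum_space X Y \<subseteq> X" using sum_lub[OF X, of X Y] by blast
    then have "sum_space X Y = X" using sum_ub1[OF Y, of X] by (rule antisym)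
    then show False using quot_ne[OF q] by simp
  qed
  then obtain y where y: "y \<in> Y" "y \<notin> X" by blast
  have ys: "y \<in> sum_space X Y" using y sum_ub2[OF X] by blast
  have S: "sum_space X Y = span1 X y" using quot_gen[OF X q ys y(2)] .
  have "Y \<subseteq> span1 (X \<inter> Y) y"
  proof
    fix y' assume y': "y' \<in> Y"
    then have "y' \<in> span1 X y" using S sum_ub2[OF X] by blast
    then obtain x t where xt: "y' = x + sm t y" "x \<in> X" unfolding span1_def by blast
    have "x \<in> Y" using subdiff_mem2[OF Y, of x "sm t y"] xt y' subsm[OF Y y(1)] by simp
    then show "y' \<in> span1 (X \<inter> Y) y" using xt span1_mem by blast
  qed
  moreover have "span1 (X \<inter> Y) y \<subseteq> Y" using span1_lub[OF Y] y by blast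
  ultimately have "Y = span1 (X \<inter> Y) y" by (rule antisym)
  moreover have "X \<inter> Y \<subseteq> Y" "y \<notin> X \<inter> Y" using y by auto
  ultimately show ?thesis unfolding quot_dim1_alt using y(1) by blast
qed

lemma adj_sym: "adjacent sm X Y \<longleftrightarrow> adjacent sm Y X"
  using sum_comm[of X Y] unfolding adjacent_def by auto

lemma adj_quot:
  assumes X: "subspace sm X" and Y: "subspace sm Y" and a: "adjacent sm X Y"
  shows "quot_dim1 sm X (X \<inter> Y)" "quot_dim1 sm Y (X \<inter> Y)"
proof -
  show "quot_dim1 sm Y (X \<inter> Y)" using quot_sum_inter[OF X Y] a unfolding adjacent_def by blast
  have "quot_dim1 sm (sum_space Y X) Y" using a sum_comm[of X Y] unfolding adjacent_def by simp
  then have "quot_dim1 sm X (Y \<inter> X)" using quot_sum_inter[OF Y X] by blast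
  then show "quot_dim1 sm X (X \<inter> Y)" by (simp add: Int_commute)
qed

lemma adj_notsub:
  assumes X: "subspace sm X" and Y: "subspace sm Y" and a: "adjacent sm X Y"
  shows "\<not> X \<subseteq> Y"
proof
  assume "X \<subseteq> Y"
  then have "sum_space X Y = Y" using sum_sub_eq X Y by blast
  moreover have "quot_dim1 sm (sum_space X Y) Y" using a unfolding adjacent_def by blast
  ultimately show False using quot_ne by force
qed

lemma adj_neq: "subspace sm X \<Longrightarrow> subspace sm Y \<Longrightarrow> adjacent sm X Y \<Longrightarrow> X \<noteq> Y"
  using adj_notsub by blast

lemma adj_span1:
  assumes S: "subspace sm S" and a: "a \<notin> span1 S b" and b: "b \<notin> span1 S a"
  shows "adjacent sm (span1 S a) (span1 S b)"
proof -
  have 1: "sum_space (span1 S a) (span1 S b) = span1 (span1 S a) b"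
    using sum_span1[OF span1_sub[OF S] S span1_base, of a b] .
  have 2: "sum_space (span1 S a) (span1 S b) = span1 (span1 S b) a"
    using sum_span1[OF span1_sub[OF S] S span1_base, of b a] sum_comm[of "span1 S a" "span1 S b"] by simp
  show ?thesis unfolding adjacent_def 1
    using quot_span1[OF span1_sub[OF S] b] quot_span1[OF span1_sub[OF S] a] 1 2 by simp
qed

lemma classical:
  assumes X: "subspace sm X" and Y: "subspace sm Y" and W: "subspace sm W"
    and xy: "adjacent sm X Y" and wx: "adjacent sm W X" and wy: "adjacent sm W Y"
  shows "X \<inter> Y \<subseteq> W \<or> W \<subseteq> sum_space X Y"
proof (rule ccontr)
  assume "\<not> ?thesis"
  then obtain m where m: "m \<in> X" "m \<in> Y" "m \<notin> W" and nW: "\<not> W \<subseteq> sum_space X Y" by blast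
  have qX: "quot_dim1 sm X (W \<inter> X)" and qW: "quot_dim1 sm W (W \<inter> X)"
    using adj_quot[OF W X wx] by auto
  have qY: "quot_dim1 sm Y (W \<inter> Y)" using adj_quot[OF W Y wy] by auto
  have Yeq: "Y = span1 (W \<inter> Y) m" using quot_gen[OF sub_inter[OF W Y] qY] m by blast
  obtain y where y: "y \<in> Y" "y \<notin> X" using adj_notsub[OF Y X] xy adj_sym by blast
  obtain z t where zt: "y = z + sm t m" "z \<in> W \<inter> Y" using y Yeq unfolding span1_def by blast
  have zX: "z \<notin> X" using zt y subadd[OF X, of z "sm t m"] subsm[OF X m(1)] by blast
  have "W = span1 (W \<inter> X) z" using quot_gen[OF sub_inter[OF W X] qW] zt zX by blast
  moreover have "span1 (W \<inter> X) z \<subseteq> sum_space X Y"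
    apply (rule span1_lub[OF sub_sum[OF X Y]])
    using sum_ub1[OF Y] apply blast
    using sum_ub2[OF X] zt by blast
  ultimately show False using nW by blast
qed

definition plane :: "'v set \<Rightarrow> 'v set \<Rightarrow> bool" where
  "plane M N \<longleftrightarrow> subspace sm M \<and> subspace sm N \<and> (\<exists>X0. subspace sm X0 \<and> quot_dim1 sm X0 M \<and> quot_dim1 sm N X0)"

lemma plane_mid:
  assumes p: "plane M N" and A: "subspace sm A" and MA: "M \<subset> A" and AN: "A \<subset> N"
  shows "quot_dim1 sm A M \<and> quot_dim1 sm N A"
proof -
  obtain X0 where M: "subspace sm M" and N: "subspace sm N" and X0: "subspace sm X0"
    and q1: "quot_dim1 sm X0 M" and q2: "quot_dim1 sm N X0"
    using p unfolding plane_def by blast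
  obtain c where c: "c \<in> A" "c \<notin> M" using MA by blast
  show ?thesis
  proof (cases "c \<in> X0")
    case True
    then have "X0 = span1 M c" using quot_gen[OF M q1] c by blast
    then have "X0 \<subseteq> A" using span1_lub[OF A] MA c by blast
    then have "A = X0 \<or> A = N" using quot_between[OF X0 A q2] AN by blast
    then have "A = X0" using AN by blast
    then show ?thesis using q1 q2 by simp
  next
    case False
    have cN: "c \<in> N" using c AN by blast
    have Nc: "N = span1 X0 c" using quot_gen[OF X0 q2 cN False] .
    obtain a where a: "a \<in> X0" "a \<notin> M" "X0 = span1 M a" using q1 unfolding quot_dim1_alt by blast
    have aMc: "a \<notin> span1 M c"
    proof
      assume "a \<in> span1 M c"
      then obtain m t where mt: "a = m + sm t c" "m \<in> M" unfolding span1_def by blast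
      show False
      proof (cases "t = 0")
        case True then show False using mt a by simp
      next
        case False
        have "c = sm (inverse t) a + (- sm (inverse t) m)" using mt False by (simp add: add_r inv_cancel)
        moreover have "sm (inverse t) a \<in> X0" using a(1) subsm[OF X0] by blast
        moreover have "- sm (inverse t) m \<in> X0"
          using mt(2) quot_sub[OF q1] subneg[OF X0] subsm[OF X0] by blast
        ultimately have "c \<in> X0" using subadd[OF X0] by metis
        then show False using \<open>c \<notin> X0\<close> by blast
      qed
    qed
    have "N = span1 (span1 M c) a" using Nc a(3) span1_comm[OF M, of a c] by (simp only:)
    then have qN: "quot_dim1 sm N (span1 M c)" using quot_span1[OF span1_sub[OF M] aMc] by simp
    have sub: "span1 M c \<subseteq> A" using span1_lub[OF A] MA c by blast
    have "A = span1 M c \<or> A = N" using quot_between[OF span1_sub[OF M] A qN sub] AN by blast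
    then have "A = span1 M c" using AN by blast
    then show ?thesis using qN quot_span1[OF M c(2)] by simp
  qed
qed

lemma plane_two:
  assumes p: "plane M N" and A: "subspace sm A" and B: "subspace sm B"
    and MA: "M \<subset> A" and AN: "A \<subset> N" and MB: "M \<subset> B" and BN: "B \<subset> N" and AB: "A \<noteq> B"
  shows "adjacent sm A B \<and> A \<inter> B = M \<and> sum_space A B = N"
proof -
  have M: "subspace sm M" and N: "subspace sm N" using p unfolding plane_def by auto
  have qA: "quot_dim1 sm A M" "quot_dim1 sm N A" using plane_mid[OF p A MA AN] by auto
  have qB: "quot_dim1 sm B M" "quot_dim1 sm N B" using plane_mid[OF p B MB BN] by auto
  have MA': "M \<subseteq> A" "M \<noteq> A" using MA by auto
  have MB': "M \<subseteq> B" "M \<noteq> B" using MB by auto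
  have nAB: "\<not> A \<subseteq> B"
  proof
    assume "A \<subseteq> B"
    then have "A = M \<or> A = B" using quot_between[OF M A qB(1) MA'(1)] by blast
    then show False using MA'(2) AB by metis
  qed
  have nBA: "\<not> B \<subseteq> A"
  proof
    assume "B \<subseteq> A"
    then have "B = M \<or> B = A" using quot_between[OF M B qA(1) MB'(1)] by blast
    then show False using MB'(2) AB by metis
  qed
  have "M \<subseteq> A \<inter> B" using MA'(1) MB'(1) by blast
  then have "A \<inter> B = M \<or> A \<inter> B = A" using quot_between[OF M sub_inter[OF A B] qA(1)] by blast
  then have i: "A \<inter> B = M" using nAB by blast
  have s1: "A \<subseteq> sum_space A B" "B \<subseteq> sum_space A B" using sum_ub1[OF B] sum_ub2[OF A] by auto
  have s2: "sum_space A B \<subseteq> N" using sum_lub[OF N] AN BN by blast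
  have "sum_space A B = A \<or> sum_space A B = N" using quot_between[OF A sub_sum[OF A B] qA(2) s1(1) s2] .
  then have s: "sum_space A B = N" using s1(2) nBA by metis
  have "adjacent sm A B" unfolding adjacent_def s using qA(2) qB(2) by (rule conjI)
  then show ?thesis using s i by (intro conjI)
qed

lemma adj_plane:
  assumes X: "subspace sm X" and Y: "subspace sm Y" and a: "adjacent sm X Y"
  shows "plane (X \<inter> Y) (sum_space X Y)" "X \<inter> Y \<subset> X" "X \<subset> sum_space X Y"
    "X \<inter> Y \<subset> Y" "Y \<subset> sum_space X Y"
proof -
  have q: "quot_dim1 sm X (X \<inter> Y)" "quot_dim1 sm Y (X \<inter> Y)" using adj_quot[OF X Y a] by auto
  have q2: "quot_dim1 sm (sum_space X Y) X" "quot_dim1 sm (sum_space X Y) Y"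
    using a unfolding adjacent_def by auto
  show "plane (X \<inter> Y) (sum_space X Y)" unfolding plane_def
    using sub_inter[OF X Y] sub_sum[OF X Y] X q(1) q2(1) by (intro conjI exI[of _ X])
  show "X \<inter> Y \<subset> X" using quot_sub[OF q(1)] not_sym[OF quot_ne[OF q(1)]] by (rule psubsetI)
  show "X \<inter> Y \<subset> Y" using quot_sub[OF q(2)] not_sym[OF quot_ne[OF q(2)]] by (rule psubsetI)
  show "X \<subset> sum_space X Y" using quot_sub[OF q2(1)] not_sym[OF quot_ne[OF q2(1)]] by (rule psubsetI)
  show "Y \<subset> sum_space X Y" using quot_sub[OF q2(2)] not_sym[OF quot_ne[OF q2(2)]] by (rule psubsetI)
qed

end


context lvs begin

lemma coset_mem: "subspace sm X \<Longrightarrow> v \<in> coset v X"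
  unfolding coset_def using sub0 by force

lemma coset_eq: assumes X: "subspace sm X" and d: "v - w \<in> X" shows "coset v X = coset w X"
proof
  show "coset v X \<subseteq> coset w X"
  proof
    fix z assume "z \<in> coset v X"
    then obtain x where "z = v + x" "x \<in> X" unfolding coset_def by blast
    moreover have "v + x = w + ((v - w) + x)" by simp
    ultimately show "z \<in> coset w X" unfolding coset_def using subadd[OF X d] by blast
  qed
  show "coset w X \<subseteq> coset v X"
  proof
    fix z assume "z \<in> coset w X"
    then obtain x where "z = w + x" "x \<in> X" unfolding coset_def by blast
    moreover have "w + x = v + (x - (v - w))" by simp
    ultimately show "z \<in> coset v X" unfolding coset_def using subdiff[OF X _ d] by blast
  qed
qed

lemma coset_eqD: assumes X: "subspace sm X" and e: "coset v X = coset w X" shows "v - w \<in> X"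
proof -
  have "v \<in> coset w X" using coset_mem[OF X, of v] e by simp
  then obtain x where "v = w + x" "x \<in> X" unfolding coset_def by blast
  then show ?thesis by simp
qed

lemma Grass_sub: "X \<in> Grass sm \<Longrightarrow> subspace sm X" unfolding Grass_def by blast

lemma G_not_line:
  assumes d: "dim_gt_2 sm" and G: "X \<in> Grass sm" and Xx: "X = span1 {0} x"
  shows False
proof -
  have X: "subspace sm X" using Grass_sub[OF G] .
  obtain f where bij: "bij_betw f X {coset v X | v. True}"
    and sc: "\<forall>a. \<forall>x\<in>X. \<forall>u\<in>f x. f (sm a x) = coset (sm a u) X"
    using G unfolding Grass_def iso_quot_def by blast
  have xX: "x \<in> X" using Xx span1_vec[OF sub_zero] by blast
  have "f x \<in> {coset v X | v. True}" using bij xX bij_betwE by blast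
  then obtain u0 where u0: "f x = coset u0 X" by blast
  have u0m: "u0 \<in> f x" using u0 coset_mem[OF X] by simp
  have "\<forall>v. \<exists>a b. v = sm a u0 + sm b x"
  proof
    fix v
    have "coset v X \<in> f ` X" using bij unfolding bij_betw_def by blast
    then obtain x' where x': "x' \<in> X" "coset v X = f x'" by blast
    then obtain a where "x' = sm a x" using Xx unfolding span1_def by auto
    then have "coset v X = coset (sm a u0) X" using sc xX u0m x' by simp
    then have "v - sm a u0 \<in> X" using coset_eqD[OF X] by blast
    then obtain b where "v - sm a u0 = sm b x" using Xx unfolding span1_def by auto
    then have "v = sm a u0 + sm b x" by (simp add: algebra_simps)
    then show "\<exists>a b. v = sm a u0 + sm b x" by blast
  qed
  then show False using not_2dim[OF d] by blast
qed

lemma G_not_hyperplane: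
  assumes d: "dim_gt_2 sm" and G: "X \<in> Grass sm" and y: "y \<notin> X" and U: "span1 X y = UNIV"
  shows False
proof -
  have X: "subspace sm X" using Grass_sub[OF G] .
  obtain f where bij: "bij_betw f X {coset v X | v. True}"
    and sc: "\<forall>a. \<forall>x\<in>X. \<forall>u\<in>f x. f (sm a x) = coset (sm a u) X"
    using G unfolding Grass_def iso_quot_def by blast
  have "coset y X \<in> f ` X" using bij unfolding bij_betw_def by blast
  then obtain x0 where x0: "x0 \<in> X" "f x0 = coset y X" by (metis imageE)
  have ym: "y \<in> f x0" using x0 coset_mem[OF X] by simp
  have "X \<subseteq> span1 {0} x0"
  proof
    fix x assume xX: "x \<in> X"
    have "f x \<in> {coset v X | v. True}" using bij xX bij_betwE by blast
    then obtain v where fx: "f x = coset v X" by blast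
    have "v \<in> span1 X y" using U by simp
    then obtain x' a where v: "v = x' + sm a y" "x' \<in> X" unfolding span1_def by blast
    have "coset v X = coset (sm a y) X" by (rule coset_eq[OF X]) (simp add: v)
    then have "f x = f (sm a x0)" using fx sc x0 ym by simp
    moreover have "sm a x0 \<in> X" using subsm[OF X x0(1)] .
    ultimately have "x = sm a x0" using bij xX unfolding bij_betw_def inj_on_def by blast
    then show "x \<in> span1 {0} x0" using span1_mem[of 0 "{0}" a x0] by simp
  qed
  moreover have "span1 {0} x0 \<subseteq> X" using span1_lub[OF X] sub0[OF X] x0 by blast
  ultimately have "X = span1 {0} x0" by (rule antisym)
  then show False using G_not_line[OF d G] by blast
qed

end

locale lvs_inv = lvs sm for sm :: "'k::division_ring \<Rightarrow> 'v::ab_group_add \<Rightarrow> 'v" +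
  fixes T :: "'v \<Rightarrow> 'v"
  assumes Tadd: "T (x + y) = T x + T y" and Tsm: "T (sm a x) = sm a (T x)" and TT: "T (T x) = x"
begin

lemma T0: "T 0 = 0" using Tadd[of 0 0] by simp

lemma T_inj: "inj T" by (metis TT injI)

lemma T_sub: "subspace sm X \<Longrightarrow> subspace sm (T ` X)"
  unfolding subspace_def
proof (intro conjI ballI allI)
  assume X: "0 \<in> X \<and> (\<forall>x\<in>X. \<forall>y\<in>X. x + y \<in> X) \<and> (\<forall>a. \<forall>x\<in>X. sm a x \<in> X)"
  show "0 \<in> T ` X" using X T0 by (metis image_eqI)
  fix x y assume "x \<in> T ` X" "y \<in> T ` X"
  then obtain x' y' where "x = T x'" "y = T y'" "x' \<in> X" "y' \<in> X" by blast
  then show "x + y \<in> T ` X" using X Tadd[of x' y'] by (metis image_eqI)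
next
  fix a x assume X: "0 \<in> X \<and> (\<forall>x\<in>X. \<forall>y\<in>X. x + y \<in> X) \<and> (\<forall>a. \<forall>x\<in>X. sm a x \<in> X)"
    and "x \<in> T ` X"
  then obtain x' where "x = T x'" "x' \<in> X" by blast
  then show "sm a x \<in> T ` X" using X Tsm[of a x'] by (metis image_eqI)
qed

lemma T_coset: "T ` coset v X = coset (T v) (T ` X)"
proof
  show "T ` coset v X \<subseteq> coset (T v) (T ` X)"
    unfolding coset_def using Tadd by blast
  show "coset (T v) (T ` X) \<subseteq> T ` coset v X"
  proof
    fix z assume "z \<in> coset (T v) (T ` X)"
    then obtain x where "z = T v + T x" "x \<in> X" unfolding coset_def by blast
    then have "z = T (v + x)" "v + x \<in> coset v X" unfolding coset_def using Tadd by auto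
    then show "z \<in> T ` coset v X" by blast
  qed
qed

lemma T_Grass: assumes G: "X \<in> Grass sm" shows "T ` X \<in> Grass sm"
proof -
  have X: "subspace sm X" using G unfolding Grass_def by blast
  obtain f where bij: "bij_betw f X {coset v X | v. True}"
    and ad: "\<forall>x\<in>X. \<forall>y\<in>X. \<forall>u\<in>f x. \<forall>w\<in>f y. f (x + y) = coset (u + w) X"
    and sc: "\<forall>a. \<forall>x\<in>X. \<forall>u\<in>f x. f (sm a x) = coset (sm a u) X"
    using G unfolding Grass_def iso_quot_def by blast
  define g where "g y = T ` f (T y)" for y
  have gT: "g (T x) = T ` f x" for x unfolding g_def TT ..
  have inj: "inj_on g (T ` X)"
  proof (rule inj_onI)
    fix y1 y2 assume "y1 \<in> T ` X" "y2 \<in> T ` X" "g y1 = g y2"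
    then obtain x1 x2 where x: "y1 = T x1" "y2 = T x2" "x1 \<in> X" "x2 \<in> X" "T ` f x1 = T ` f x2"
      using gT by auto
    then have "f x1 = f x2" using T_inj by (simp add: inj_image_eq_iff)
    then have "x1 = x2" using bij x unfolding bij_betw_def inj_on_def by blast
    then show "y1 = y2" using x by simp
  qed
  have img: "g ` (T ` X) = {coset v (T ` X) | v. True}"
  proof
    show "g ` (T ` X) \<subseteq> {coset v (T ` X) | v. True}"
    proof
      fix z assume "z \<in> g ` (T ` X)"
      then obtain x where x: "x \<in> X" "z = T ` f x" using gT by auto
      then have "f x \<in> {coset v X | v. True}" using bij bij_betwE by blast
      then obtain v where "f x = coset v X" by blast
      then show "z \<in> {coset v (T ` X) | v. True}" using x T_coset by auto
    qed
    show "{coset v (T ` X) | v. True} \<subseteq> g ` (T ` X)"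
    proof
      fix z assume "z \<in> {coset v (T ` X) | v. True}"
      then obtain v where z: "z = coset v (T ` X)" by blast
      have "coset (T v) X \<in> f ` X" using bij unfolding bij_betw_def by blast
      then obtain x where x: "x \<in> X" "f x = coset (T v) X" by (metis imageE)
      have "g (T x) = coset v (T ` X)" using gT x T_coset TT by simp
      then show "z \<in> g ` (T ` X)" using z x by blast
    qed
  qed
  have ad': "\<forall>x\<in>T ` X. \<forall>y\<in>T ` X. \<forall>u\<in>g x. \<forall>w\<in>g y. g (x + y) = coset (u + w) (T ` X)"
  proof (intro ballI)
    fix y1 y2 u w assume "y1 \<in> T ` X" "y2 \<in> T ` X" "u \<in> g y1" "w \<in> g y2"
    then obtain x1 x2 u0 w0 where x: "y1 = T x1" "y2 = T x2" "x1 \<in> X" "x2 \<in> X"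
      "u = T u0" "w = T w0" "u0 \<in> f x1" "w0 \<in> f x2"
      using gT by auto
    have "g (y1 + y2) = g (T (x1 + x2))" using x Tadd by simp
    also have "\<dots> = T ` coset (u0 + w0) X" using gT ad x by simp
    also have "\<dots> = coset (u + w) (T ` X)" using T_coset Tadd x by simp
    finally show "g (y1 + y2) = coset (u + w) (T ` X)" .
  qed
  have sc': "\<forall>a. \<forall>x\<in>T ` X. \<forall>u\<in>g x. g (sm a x) = coset (sm a u) (T ` X)"
  proof (intro allI ballI)
    fix a y1 u assume "y1 \<in> T ` X" "u \<in> g y1"
    then obtain x1 u0 where x: "y1 = T x1" "x1 \<in> X" "u = T u0" "u0 \<in> f x1"
      using gT by auto
    have "g (sm a y1) = g (T (sm a x1))" using x Tsm by simp
    also have "\<dots> = T ` coset (sm a u0) X" using gT sc x by simp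
    also have "\<dots> = coset (sm a u) (T ` X)" using T_coset Tsm x by simp
    finally show "g (sm a y1) = coset (sm a u) (T ` X)" .
  qed
  have "iso_quot sm (T ` X)" unfolding iso_quot_def
    using inj img ad' sc' unfolding bij_betw_def by blast
  then show ?thesis unfolding Grass_def using T_sub[OF X] by blast
qed

end



context lvs begin

lemma exchange:
  assumes S: "subspace sm S" and a: "a \<notin> S" and b: "b \<notin> S" and G: "span1 S a \<in> Grass sm"
  shows "span1 S b \<in> Grass sm"
proof (cases "b \<in> span1 S a")
  case True
  then show ?thesis using span1_exch[OF S True b] G by simp
next
  case False
  define P where "P = span1 (span1 S a) b"
  have P: "subspace sm P" unfolding P_def using span1_sub S by blast
  obtain C where C: "subspace sm C" "P \<inter> C = {0}" "sum_space P C = UNIV"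
    using complement[OF P sub_univ] by blast
  define R where "R = sum_space S C"
  have R: "subspace sm R" unfolding R_def using sub_sum S C by blast
  have SR: "S \<subseteq> R" unfolding R_def using sum_ub1[OF C(1)] .
  have SP: "S \<subseteq> P" unfolding P_def using span1_base by blast
  have aP: "a \<in> P" unfolding P_def using span1_vec[OF S] span1_base by blast
  have bP: "b \<in> P" unfolding P_def using span1_vec[OF span1_sub[OF S]] by blast
  have key: "\<gamma> = 0 \<and> \<delta> = 0" if z: "sm \<gamma> a + sm \<delta> b \<in> R" for \<gamma> \<delta>
  proof -
    obtain s c where sc: "sm \<gamma> a + sm \<delta> b = s + c" "s \<in> S" "c \<in> C"
      using z unfolding R_def sum_space_def by blast
    have zP: "sm \<gamma> a + sm \<delta> b \<in> P" using subadd[OF P] subsm[OF P] aP bP by blast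
    have "c = (sm \<gamma> a + sm \<delta> b) - s" using sc by (simp add: algebra_simps)
    then have "c \<in> P" using subdiff[OF P zP] sc SP by blast
    then have "c = 0" using C sc by blast
    then have zs: "sm \<gamma> a + sm \<delta> b = s" using sc by simp
    have d0: "\<delta> = 0"
    proof (rule ccontr)
      assume d: "\<delta> \<noteq> 0"
      have "b = sm (inverse \<delta>) s + sm (- (inverse \<delta> * \<gamma>)) a"
      proof -
        have "sm (inverse \<delta>) s = sm (inverse \<delta>) (sm \<gamma> a) + b"
          using arg_cong[OF zs, of "sm (inverse \<delta>)"] d by (simp add: add_r inv_cancel)
        moreover have "sm (- (inverse \<delta> * \<gamma>)) a = - sm (inverse \<delta>) (sm \<gamma> a)"
          by (simp add: neg_l mult_l)
        ultimately show ?thesis by (simp add: algebra_simps)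
      qed
      then have "b \<in> span1 S a" using span1_mem subsm[OF S sc(2)] by metis
      then show False using False by blast
    qed
    have g0: "\<gamma> = 0"
    proof (rule ccontr)
      assume g: "\<gamma> \<noteq> 0"
      have "sm \<gamma> a = s" using zs d0 by simp
      then have "a = sm (inverse \<gamma>) s" using g inv_cancel by metis
      then show False using a subsm[OF S sc(2)] by simp
    qed
    show ?thesis using d0 g0 by blast
  qed
  have ex: "\<exists>\<alpha> \<beta>. v - sm \<alpha> a - sm \<beta> b \<in> R" for v
  proof -
    have "v \<in> sum_space P C" using C by simp
    then obtain p c where pc: "v = p + c" "p \<in> P" "c \<in> C" unfolding sum_space_def by blast
    then obtain q \<beta> where q: "p = q + sm \<beta> b" "q \<in> span1 S a" unfolding P_def span1_def by blast
    then obtain s \<alpha> where s: "q = s + sm \<alpha> a" "s \<in> S" unfolding span1_def by blast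
    have "v - sm \<alpha> a - sm \<beta> b = s + c" using pc q s by (simp add: algebra_simps)
    then show ?thesis using s pc unfolding R_def sum_space_def by blast
  qed
  have uq: "x = x' \<and> y = y'" if "v - sm x a - sm y b \<in> R" "v - sm x' a - sm y' b \<in> R" for v x y x' y'
  proof -
    have "(v - sm x a - sm y b) - (v - sm x' a - sm y' b) \<in> R" using subdiff[OF R] that by blast
    moreover have "(v - sm x a - sm y b) - (v - sm x' a - sm y' b) = sm (x' - x) a + sm (y' - y) b"
      by (simp add: diff_l algebra_simps)
    ultimately have "sm (x' - x) a + sm (y' - y) b \<in> R" by simp
    then have "x' - x = 0 \<and> y' - y = 0" by (rule key)
    then show ?thesis by simp
  qed
  define \<alpha> where "\<alpha> v = (SOME x. \<exists>y. v - sm x a - sm y b \<in> R)" for v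
  define \<beta> where "\<beta> v = (SOME y. v - sm (\<alpha> v) a - sm y b \<in> R)" for v
  have spec: "v - sm (\<alpha> v) a - sm (\<beta> v) b \<in> R" for v
  proof -
    have "\<exists>y. v - sm (\<alpha> v) a - sm y b \<in> R" unfolding \<alpha>_def using someI_ex[OF ex] by blast
    then show ?thesis unfolding \<beta>_def by (rule someI_ex)
  qed
  have coord: "\<alpha> v = x \<and> \<beta> v = y" if "v - sm x a - sm y b \<in> R" for v x y
    using uq[OF spec that] by blast
  define T where "T v = v + sm (\<alpha> v - \<beta> v) (b - a)" for v
  have Tadd: "T (x + y) = T x + T y" for x y
  proof -
    have e: "(x + y) - sm (\<alpha> x + \<alpha> y) a - sm (\<beta> x + \<beta> y) b
       = (x - sm (\<alpha> x) a - sm (\<beta> x) b) + (y - sm (\<alpha> y) a - sm (\<beta> y) b)"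
      by (simp add: add_l algebra_simps)
    have "(x + y) - sm (\<alpha> x + \<alpha> y) a - sm (\<beta> x + \<beta> y) b \<in> R"
      unfolding e by (rule subadd[OF R spec spec])
    then have c: "\<alpha> (x + y) = \<alpha> x + \<alpha> y" "\<beta> (x + y) = \<beta> x + \<beta> y" using coord by blast+
    have "\<alpha> x + \<alpha> y - (\<beta> x + \<beta> y) = (\<alpha> x - \<beta> x) + (\<alpha> y - \<beta> y)" by (simp add: algebra_simps)
    then have "sm (\<alpha> x + \<alpha> y - (\<beta> x + \<beta> y)) (b - a) = sm (\<alpha> x - \<beta> x) (b - a) + sm (\<alpha> y - \<beta> y) (b - a)"
      by (simp only: add_l)
    then show ?thesis unfolding T_def c by (simp add: algebra_simps)
  qed
  have Tsm: "T (sm c x) = sm c (T x)" for c x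
  proof -
    have e: "sm c x - sm (c * \<alpha> x) a - sm (c * \<beta> x) b = sm c (x - sm (\<alpha> x) a - sm (\<beta> x) b)"
      by (simp add: diff_r mult_l)
    have "sm c x - sm (c * \<alpha> x) a - sm (c * \<beta> x) b \<in> R" unfolding e by (rule subsm[OF R spec])
    then have co: "\<alpha> (sm c x) = c * \<alpha> x" "\<beta> (sm c x) = c * \<beta> x" using coord by blast+
    have "c * \<alpha> x - c * \<beta> x = c * (\<alpha> x - \<beta> x)" by (simp add: algebra_simps)
    then show ?thesis unfolding T_def co by (simp add: add_r mult_l)
  qed
  have TT: "T (T x) = x" for x
  proof -
    have "T x - sm (\<beta> x) a - sm (\<alpha> x) b = x - sm (\<alpha> x) a - sm (\<beta> x) b"
      unfolding T_def by (simp add: diff_r diff_l algebra_simps)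
    then have co: "\<alpha> (T x) = \<beta> x" "\<beta> (T x) = \<alpha> x" using coord spec by metis+
    have "T (T x) = x + (sm (\<alpha> x - \<beta> x) (b - a) + sm (\<beta> x - \<alpha> x) (b - a))"
      unfolding T_def[of "T x"] co unfolding T_def by (simp add: add.assoc)
    also have "\<dots> = x" by (simp add: add_l[symmetric])
    finally show ?thesis .
  qed
  interpret lvs_inv sm T using Tadd Tsm TT by unfold_locales
  have img: "T ` span1 S a = span1 S b"
  proof
    have T1: "T (s + sm g a) = s + sm g b" if "s \<in> S" for s g
    proof -
      have "(s + sm g a) - sm g a - sm 0 b \<in> R" using that SR by auto
      then have co: "\<alpha> (s + sm g a) = g" "\<beta> (s + sm g a) = 0" using coord by blast+
      show ?thesis unfolding T_def co by (simp add: diff_r algebra_simps)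
    qed
    show "T ` span1 S a \<subseteq> span1 S b"
      using T1 span1_mem unfolding span1_def by auto
    show "span1 S b \<subseteq> T ` span1 S a"
    proof
      fix z assume "z \<in> span1 S b"
      then obtain s g where "z = s + sm g b" "s \<in> S" unfolding span1_def by blast
      then have "z = T (s + sm g a)" "s + sm g a \<in> span1 S a" using T1 span1_mem by auto
      then show "z \<in> T ` span1 S a" by blast
    qed
  qed
  show ?thesis using T_Grass[OF G] img by simp
qed

end


context lvs begin

lemma notin_span1:
  assumes M: "subspace sm M" and N: "subspace sm N" and MN: "M \<subseteq> N"
    and z: "z \<in> N" "z \<notin> M" and w: "w \<notin> N"
  shows "z \<notin> span1 M w"
proof
  assume "z \<in> span1 M w"
  then obtain m t where mt: "z = m + sm t w" "m \<in> M" unfolding span1_def by blast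
  show False
  proof (cases "t = 0")
    case True then show False using mt z by simp
  next
    case False
    have "w = sm (inverse t) z + (- sm (inverse t) m)" using mt False by (simp add: add_r inv_cancel)
    moreover have "sm (inverse t) z \<in> N" using subsm[OF N z(1)] .
    moreover have "- sm (inverse t) m \<in> N" using mt(2) MN subneg[OF N] subsm[OF N] by blast
    ultimately have "w \<in> N" using subadd[OF N] by metis
    then show False using w by blast
  qed
qed

lemma starform:
  assumes M: "subspace sm M" and X: "subspace sm X" and W: "subspace sm W"
    and a: "adjacent sm W X" and MW: "M \<subseteq> W" and q: "quot_dim1 sm X M"
  shows "quot_dim1 sm W M"
proof -
  have MX: "M \<subseteq> X" using quot_sub[OF q] .
  have "M \<subseteq> W \<inter> X" using MW MX by blast
  then have "W \<inter> X = M \<or> W \<inter> X = X" using quot_between[OF M sub_inter[OF W X] q] by blast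
  moreover have "\<not> X \<subseteq> W" using adj_notsub[OF X W] a adj_sym by blast
  ultimately have "W \<inter> X = M" by blast
  then show ?thesis using adj_quot(1)[OF W X a] by simp
qed

definition adjeq :: "'v set \<Rightarrow> 'v set \<Rightarrow> bool" where
  "adjeq W X \<longleftrightarrow> W = X \<or> adjacent sm W X"

definition Lset :: "'v set \<Rightarrow> 'v set \<Rightarrow> 'v set set" where
  "Lset X Y = {Z \<in> Grass sm. \<forall>W\<in>Grass sm. adjeq W X \<and> adjeq W Y \<longrightarrow> adjeq W Z}"

lemma pencil_pair:
  assumes p: "plane M N" and A: "subspace sm A" and B: "subspace sm B"
    and "M \<subset> A" "A \<subset> N" "M \<subset> B" "B \<subset> N"
  shows "adjeq A B"
  unfolding adjeq_def using plane_two[OF p A B] assms by blast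

lemma Lchar:
  assumes d: "dim_gt_2 sm" and XG: "X \<in> Grass sm" and YG: "Y \<in> Grass sm" and xy: "adjacent sm X Y"
  shows "Lset X Y = pencil_set sm (X \<inter> Y) (sum_space X Y)"
proof -
  define M where "M = X \<inter> Y"
  define N where "N = sum_space X Y"
  have X: "subspace sm X" and Y: "subspace sm Y" using XG YG Grass_sub by auto
  have M: "subspace sm M" and N: "subspace sm N" unfolding M_def N_def using sub_inter sub_sum X Y by auto
  have pl: "plane M N" and MX: "M \<subset> X" and XN: "X \<subset> N" and MY: "M \<subset> Y" and YN: "Y \<subset> N"
    using adj_plane[OF X Y xy] unfolding M_def N_def by auto
  have qXM: "quot_dim1 sm X M" and qNX: "quot_dim1 sm N X" and qYM: "quot_dim1 sm Y M"
    using plane_mid[OF pl X MX XN] plane_mid[OF pl Y MY YN] by auto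
  have yx: "adjacent sm Y X" using xy adj_sym by blast
  show ?thesis unfolding M_def[symmetric] N_def[symmetric]
  proof
    show "pencil_set sm M N \<subseteq> Lset X Y"
    proof
      fix Z assume "Z \<in> pencil_set sm M N"
      then have ZG: "Z \<in> Grass sm" and MZ: "M \<subset> Z" and ZN: "Z \<subset> N" unfolding pencil_set_def by auto
      have Z: "subspace sm Z" using Grass_sub[OF ZG] .
      have qZ: "quot_dim1 sm Z M" "quot_dim1 sm N Z" using plane_mid[OF pl Z MZ ZN] by auto
      have "adjeq W Z" if WG: "W \<in> Grass sm" and wx: "adjeq W X" and wy: "adjeq W Y" for W
      proof -
        have W: "subspace sm W" using Grass_sub[OF WG] .
        show ?thesis
        proof (cases "W = X \<or> W = Y")
          case True
          then show ?thesis using pencil_pair[OF pl X Z MX XN MZ ZN] pencil_pair[OF pl Y Z MY YN MZ ZN] by blast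
        next
          case False
          then have wx: "adjacent sm W X" and wy: "adjacent sm W Y" using wx wy unfolding adjeq_def by auto
          have nWX: "\<not> W \<subseteq> X" using adj_notsub[OF W X wx] .
          have nXW: "\<not> X \<subseteq> W" using adj_notsub[OF X W] wx adj_sym by blast
          have cl: "M \<subseteq> W \<or> W \<subseteq> N" using classical[OF X Y W xy wx wy] unfolding M_def N_def .
          show ?thesis
          proof (cases "M \<subseteq> W")
            case MW: True
            show ?thesis
            proof (cases "W \<subseteq> N")
              case True
              have "M \<subset> W" using MW MX nWX by blast
              moreover have "W \<subset> N" using True XN nXW by blast
              ultimately show ?thesis using pencil_pair[OF pl W Z _ _ MZ ZN] by blast
            next
              case False
              have qW: "quot_dim1 sm W M" using starform[OF M X W wx MW qXM] .
              obtain w where w: "w \<in> W" "w \<notin> N" using False by blast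
              have wM: "w \<notin> M" using w MX XN by blast
              obtain z where z: "z \<in> Z" "z \<notin> M" using MZ by blast
              have zN: "z \<in> N" using z ZN by blast
              have We: "W = span1 M w" using quot_gen[OF M qW w(1) wM] .
              have Ze: "Z = span1 M z" using quot_gen[OF M qZ(1) z] .
              have "w \<notin> span1 M z" using w Ze ZN by blast
              moreover have "z \<notin> span1 M w" using notin_span1[OF M N _ zN z(2) w(2)] MX XN by blast
              ultimately have "adjacent sm (span1 M w) (span1 M z)" using adj_span1[OF M] by blast
              then show ?thesis unfolding adjeq_def using We Ze by simp
            qed
          next
            case False
            then have WN: "W \<subseteq> N" using cl by blast
            have s1: "X \<subseteq> sum_space W X" "sum_space W X \<subseteq> N"
              using sum_ub2[OF W] sum_lub[OF N] WN XN by auto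
            have "sum_space W X = X \<or> sum_space W X = N" using quot_between[OF X sub_sum[OF W X] qNX s1] .
            moreover have "sum_space W X \<noteq> X" using sum_ub1[OF X, of W] nWX by blast
            ultimately have "sum_space W X = N" by blast
            then have qNW: "quot_dim1 sm N W" using wx unfolding adjacent_def by simp
            have s2: "Z \<subseteq> sum_space W Z" "sum_space W Z \<subseteq> N"
              using sum_ub2[OF W] sum_lub[OF N] WN ZN by auto
            have "sum_space W Z = Z \<or> sum_space W Z = N" using quot_between[OF Z sub_sum[OF W Z] qZ(2) s2] .
            moreover have "sum_space W Z \<noteq> Z"
            proof
              assume "sum_space W Z = Z"
              then have WZ: "W \<subseteq> Z" using sum_ub1[OF Z, of W] by blast
              have "Z = W \<or> Z = N" using quot_between[OF W Z qNW WZ] ZN by blast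
              then show False using MZ False ZN by blast
            qed
            ultimately have "sum_space W Z = N" by blast
            then have "adjacent sm W Z" unfolding adjacent_def using qNW qZ(2) by simp
            then show ?thesis unfolding adjeq_def by blast
          qed
        qed
      qed
      then show "Z \<in> Lset X Y" unfolding Lset_def using ZG by blast
    qed
  next
    show "Lset X Y \<subseteq> pencil_set sm M N"
    proof
      fix Z assume ZL: "Z \<in> Lset X Y"
      then have ZG: "Z \<in> Grass sm" and
        L: "\<And>W. W \<in> Grass sm \<Longrightarrow> adjeq W X \<Longrightarrow> adjeq W Y \<Longrightarrow> adjeq W Z"
        unfolding Lset_def by auto
      have Z: "subspace sm Z" using Grass_sub[OF ZG] .
      have "adjeq X Z" using L[OF XG] xy unfolding adjeq_def by blast
      moreover have "adjeq Y Z" using L[OF YG] yx unfolding adjeq_def by blast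
      ultimately consider "Z = X" | "Z = Y" | "adjacent sm Z X" "adjacent sm Z Y"
        unfolding adjeq_def using adj_sym by blast
      then show "Z \<in> pencil_set sm M N"
      proof cases
        case 1 then show ?thesis unfolding pencil_set_def using XG MX XN by blast
      next
        case 2 then show ?thesis unfolding pencil_set_def using YG MY YN by blast
      next
        case 3
        have zx: "adjacent sm Z X" and zy: "adjacent sm Z Y" using 3 by auto
        have nZX: "\<not> Z \<subseteq> X" using adj_notsub[OF Z X zx] .
        have nXZ: "\<not> X \<subseteq> Z" using adj_notsub[OF X Z] zx adj_sym by blast
        have cl: "M \<subseteq> Z \<or> Z \<subseteq> N" using classical[OF X Y Z xy zx zy] unfolding M_def N_def .
        obtain x where x: "x \<in> X" "x \<notin> M" using MX by blast
        have Xe: "X = span1 M x" using quot_gen[OF M qXM x] .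
        obtain y where y: "y \<in> Y" "y \<notin> X" using adj_notsub[OF Y X yx] by blast
        have yM: "y \<notin> M" using y MX by blast
        have Ye: "Y = span1 M y" using quot_gen[OF M qYM y(1) yM] .
        have Ne: "N = span1 X y" unfolding N_def using sum_span1[OF X M, of y] MX Ye by auto
        have xY: "x \<notin> Y" using x unfolding M_def by blast
        have xN: "x \<in> N" "y \<in> N" using x y XN YN by auto
        show ?thesis
        proof (cases "M \<subseteq> Z \<and> Z \<subseteq> N")
          case True
          have "M \<subset> Z" using True MX nZX by blast
          moreover have "Z \<subset> N" using True XN nXZ by blast
          ultimately show ?thesis unfolding pencil_set_def using ZG by blast
        next
          case False
          then consider "M \<subseteq> Z" "\<not> Z \<subseteq> N" | "Z \<subseteq> N" "\<not> M \<subseteq> Z" using cl by blast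
          then show ?thesis
          proof cases
            case 1
            have qZ: "quot_dim1 sm Z M" using starform[OF M X Z zx 1(1) qXM] .
            obtain z where z: "z \<in> Z" "z \<notin> N" using 1 by blast
            have M0: "M \<noteq> {0}"
            proof
              assume "M = {0}"
              then show False using G_not_line[OF d XG] Xe by blast
            qed
            obtain m where m: "m \<in> M" "m \<noteq> 0" using M0 sub0[OF M] by blast
            obtain M' where M': "subspace sm M'" "M' \<subseteq> M" "span1 {0} m \<inter> M' = {0}"
                "sum_space (span1 {0} m) M' = M"
              using complement[OF span1_sub[OF sub_zero] M] span1_lub[OF M] sub0[OF M] m by blast
            have mM': "m \<notin> M'" using M'(3) span1_vec[OF sub_zero, of m] m by blast
            have Me: "M = span1 M' m"
              using M'(4) sum_comm sum_span1[OF M'(1) sub_zero, of m] sub0[OF M'(1)] by auto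
            define S where "S = span1 M' x"
            have S: "subspace sm S" unfolding S_def using span1_sub M'(1) by blast
            have XS: "X = span1 S m" unfolding S_def Xe Me using span1_comm[OF M'(1)] by simp
            have SX: "S \<subseteq> X" using XS span1_base by blast
            have mS: "m \<notin> S" unfolding S_def using notin_span1[OF M'(1) M M'(2) m(1) mM' x(2)] .
            have yS: "y \<notin> S" using SX y by blast
            define W where "W = span1 S y"
            have WG: "W \<in> Grass sm" unfolding W_def using exchange[OF S mS yS] XS XG by simp
            have mW: "m \<notin> span1 S y" using notin_span1[OF S X SX _ mS y(2)] m MX by blast
            have "adjacent sm W X" unfolding W_def XS using adj_span1[OF S _ mW] y XS by simp
            then have wx: "adjeq W X" unfolding adjeq_def by blast
            define S' where "S' = span1 M' y"
            have S': "subspace sm S'" unfolding S'_def using span1_sub M'(1) by blast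
            have YS: "Y = span1 S' m" unfolding S'_def Ye Me using span1_comm[OF M'(1)] by simp
            have WS: "W = span1 S' x" unfolding W_def S_def S'_def using span1_comm[OF M'(1)] by simp
            have S'Y: "S' \<subseteq> Y" using YS span1_base by blast
            have mS': "m \<notin> S'" unfolding S'_def using notin_span1[OF M'(1) M M'(2) m(1) mM' yM] .
            have mW': "m \<notin> span1 S' x" using notin_span1[OF S' Y S'Y _ mS' xY] m MY by blast
            have "adjacent sm W Y" unfolding WS YS using adj_span1[OF S' _ mW'] xY YS by simp
            then have wy: "adjeq W Y" unfolding adjeq_def by blast
            have "adjeq W Z" using L[OF WG wx wy] .
            moreover have "W \<noteq> Z" using mW m(1) 1(1) W_def by blast
            ultimately have wz: "adjacent sm W Z" unfolding adjeq_def by blast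
            have W: "subspace sm W" using Grass_sub[OF WG] .
            have WN: "W \<subseteq> N" unfolding W_def using span1_lub[OF N] SX XN xN by blast
            have qs: "quot_dim1 sm (sum_space W Z) W" using wz unfolding adjacent_def by blast
            have ms: "m \<in> sum_space W Z" "z \<in> sum_space W Z"
              using sum_ub2[OF W, of Z] m(1) 1(1) z(1) by auto
            have "sum_space W Z = span1 W m" using quot_gen[OF W qs ms(1)] mW W_def by blast
            then have "z \<in> span1 W m" using ms by simp
            moreover have "span1 W m \<subseteq> N" using span1_lub[OF N] WN m(1) MX XN by blast
            ultimately show ?thesis using z by blast
          next
            case 2
            have NU: "N \<noteq> UNIV"
            proof
              assume "N = UNIV"
              then show False using G_not_hyperplane[OF d XG y(2)] Ne by simp
            qed
            obtain w where w: "w \<notin> N" using NU by blast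
            have wM: "w \<notin> M" using w MX XN by blast
            define W where "W = span1 M w"
            have WG: "W \<in> Grass sm" unfolding W_def using exchange[OF M x(2) wM] Xe XG by simp
            have wX: "w \<notin> span1 M x" using w Xe XN by blast
            have xW: "x \<notin> span1 M w" using notin_span1[OF M N _ xN(1) x(2) w] MX XN by blast
            have wx: "adjeq W X" unfolding adjeq_def W_def using adj_span1[OF M wX xW] Xe by simp
            have wY: "w \<notin> span1 M y" using w Ye YN by blast
            have yW: "y \<notin> span1 M w" using notin_span1[OF M N _ xN(2) yM w] MX XN by blast
            have wy: "adjeq W Y" unfolding adjeq_def W_def using adj_span1[OF M wY yW] Ye by simp
            have "adjeq W Z" using L[OF WG wx wy] .
            moreover have "W \<noteq> Z" using w 2(1) span1_vec[OF M] W_def by blast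
            ultimately have wz: "adjacent sm W Z" unfolding adjeq_def by blast
            have W: "subspace sm W" using Grass_sub[OF WG] .
            obtain m where m: "m \<in> M" "m \<notin> Z" using 2 by blast
            have qs: "quot_dim1 sm (sum_space W Z) Z" using wz unfolding adjacent_def by blast
            have ms: "m \<in> sum_space W Z" "w \<in> sum_space W Z"
              using sum_ub1[OF Z, of W] m(1) span1_base span1_vec[OF M] W_def by blast+
            have "sum_space W Z = span1 Z m" using quot_gen[OF Z qs ms(1) m(2)] .
            then have "w \<in> span1 Z m" using ms by simp
            moreover have "span1 Z m \<subseteq> N" using span1_lub[OF N] 2(1) m(1) MX XN by blast
            ultimately show ?thesis using w by blast
          qed
        qed
      qed
    qed
  qed
qed

end


context lvs begin

lemma pencil_of_adj:
  assumes XG: "X \<in> Grass sm" and YG: "Y \<in> Grass sm" and xy: "adjacent sm X Y"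
  shows "pencil_set sm (X \<inter> Y) (sum_space X Y) \<in> pencils sm"
proof -
  have X: "subspace sm X" and Y: "subspace sm Y" using XG YG Grass_sub by auto
  have q: "quot_dim1 sm X (X \<inter> Y)" using adj_quot[OF X Y xy] by blast
  have q2: "quot_dim1 sm (sum_space X Y) X" using xy unfolding adjacent_def by blast
  have "\<exists>X0\<in>Grass sm. X \<inter> Y \<subseteq> X0 \<and> X0 \<subseteq> sum_space X Y \<and> quot_dim1 sm X0 (X \<inter> Y) \<and> quot_dim1 sm (sum_space X Y) X0"
    using XG q q2 quot_sub[OF q] quot_sub[OF q2] by (intro bexI[OF _ XG]) simp
  then show ?thesis unfolding pencils_def
    using sub_inter[OF X Y] sub_sum[OF X Y] by - (rule CollectI, rule exI[of _ "X \<inter> Y"], rule exI[of _ "sum_space X Y"], blast)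
qed

lemma pencil_dest:
  assumes p: "p \<in> pencils sm"
  shows "\<exists>X\<in>Grass sm. \<exists>Y\<in>Grass sm. adjacent sm X Y \<and> p = pencil_set sm (X \<inter> Y) (sum_space X Y)"
proof -
  obtain M N X0 where pe: "p = pencil_set sm M N" and M: "subspace sm M" and N: "subspace sm N"
    and XG: "X0 \<in> Grass sm" and q1: "quot_dim1 sm X0 M" and q2: "quot_dim1 sm N X0"
    using p unfolding pencils_def by blast
  have X: "subspace sm X0" using Grass_sub[OF XG] .
  obtain a where a: "a \<in> X0" "a \<notin> M" "X0 = span1 M a" using q1 unfolding quot_dim1_alt by blast
  obtain b where b: "b \<in> N" "b \<notin> X0" "N = span1 X0 b" using q2 unfolding quot_dim1_alt by blast
  have MX: "M \<subseteq> X0" using quot_sub[OF q1] .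
  have bM: "b \<notin> M" using b MX by blast
  define Y where "Y = span1 M b"
  have YG: "Y \<in> Grass sm" unfolding Y_def using exchange[OF M a(2) bM] a(3) XG by simp
  have aY: "a \<notin> span1 M b" using notin_span1[OF M X MX a(1) a(2) b(2)] .
  have bX: "b \<notin> span1 M a" using b a by simp
  have xy: "adjacent sm X0 Y" unfolding Y_def using adj_span1[OF M aY bX] a(3) by simp
  have s: "sum_space X0 Y = N" unfolding Y_def b(3) using sum_span1[OF X M MX] .
  have "M \<subseteq> X0 \<inter> Y" unfolding Y_def using MX span1_base by blast
  then have "X0 \<inter> Y = M \<or> X0 \<inter> Y = X0"
    using quot_between[OF M sub_inter[OF X Grass_sub[OF YG]] q1] by blast
  moreover have "\<not> X0 \<subseteq> Y" using adj_notsub[OF X Grass_sub[OF YG] xy] .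
  ultimately have i: "X0 \<inter> Y = M" by blast
  show ?thesis apply (rule bexI[OF _ XG], rule bexI[OF _ YG]) using xy pe s i by simp
qed

lemma pencil_adj:
  assumes p: "p \<in> pencils sm" and A: "A \<in> p" and B: "B \<in> p" and AB: "A \<noteq> B"
  shows "adjacent sm A B"
proof -
  obtain M N X0 where pe: "p = pencil_set sm M N" and M: "subspace sm M" and N: "subspace sm N"
    and XG: "X0 \<in> Grass sm" and q1: "quot_dim1 sm X0 M" and q2: "quot_dim1 sm N X0"
    using p unfolding pencils_def by blast
  have pl: "plane M N" unfolding plane_def using M N XG Grass_sub q1 q2 by blast
  have A': "A \<in> Grass sm" "M \<subset> A" "A \<subset> N" using A unfolding pe pencil_set_def by auto
  have B': "B \<in> Grass sm" "M \<subset> B" "B \<subset> N" using B unfolding pe pencil_set_def by auto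
  show ?thesis using plane_two[OF pl Grass_sub[OF A'(1)] Grass_sub[OF B'(1)] A'(2,3) B'(2,3) AB] by blast
qed

lemma aut_pencils:
  assumes d: "dim_gt_2 sm" and bij: "bij_betw g (Grass sm) (Grass sm)"
    and adj: "\<forall>X\<in>Grass sm. \<forall>Y\<in>Grass sm. adjacent sm X Y \<longleftrightarrow> adjacent sm (g X) (g Y)"
    and p: "p \<in> pencils sm"
  shows "g ` p \<in> pencils sm"
proof -
  obtain X Y where XG: "X \<in> Grass sm" and YG: "Y \<in> Grass sm" and xy: "adjacent sm X Y"
    and pe: "p = pencil_set sm (X \<inter> Y) (sum_space X Y)"
    using pencil_dest[OF p] by blast
  have inj: "inj_on g (Grass sm)" and img: "g ` Grass sm = Grass sm" using bij unfolding bij_betw_def by auto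
  have gG: "g W \<in> Grass sm" if "W \<in> Grass sm" for W using img that by blast
  have ae: "adjeq (g A) (g B) \<longleftrightarrow> adjeq A B" if "A \<in> Grass sm" "B \<in> Grass sm" for A B
  proof -
    have "g A = g B \<longleftrightarrow> A = B" using inj_on_eq_iff[OF inj that] .
    moreover have "adjacent sm (g A) (g B) \<longleftrightarrow> adjacent sm A B" using adj that by blast
    ultimately show ?thesis unfolding adjeq_def by simp
  qed
  have gxy: "adjacent sm (g X) (g Y)" using adj XG YG xy by blast
  have "g ` Lset X Y = Lset (g X) (g Y)"
  proof
    show "g ` Lset X Y \<subseteq> Lset (g X) (g Y)"
    proof
      fix z assume "z \<in> g ` Lset X Y"
      then obtain Z where Z: "z = g Z" "Z \<in> Lset X Y" by blast
      have ZG: "Z \<in> Grass sm" using Z(2) unfolding Lset_def by blast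
      have "adjeq W' (g Z)" if "W' \<in> Grass sm" "adjeq W' (g X)" "adjeq W' (g Y)" for W'
      proof -
        have "W' \<in> g ` Grass sm" using img that(1) by simp
        then obtain W where W: "W \<in> Grass sm" "W' = g W" by (metis imageE)
        have "adjeq W X" using that(2) ae[OF W(1) XG] W(2) by simp
        moreover have "adjeq W Y" using that(3) ae[OF W(1) YG] W(2) by simp
        ultimately have "adjeq W Z" using Z(2) W(1) unfolding Lset_def by blast
        then show ?thesis using ae[OF W(1) ZG] W(2) by simp
      qed
      then show "z \<in> Lset (g X) (g Y)" unfolding Lset_def using Z(1) gG[OF ZG] by blast
    qed
    show "Lset (g X) (g Y) \<subseteq> g ` Lset X Y"
    proof
      fix z assume zL: "z \<in> Lset (g X) (g Y)"
      then have "z \<in> Grass sm" unfolding Lset_def by blast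
      then have "z \<in> g ` Grass sm" using img by simp
      then obtain Z where Z: "Z \<in> Grass sm" "z = g Z" by (metis imageE)
      have "adjeq W Z" if "W \<in> Grass sm" "adjeq W X" "adjeq W Y" for W
      proof -
        have "adjeq (g W) (g X)" using that(2) ae[OF that(1) XG] by simp
        moreover have "adjeq (g W) (g Y)" using that(3) ae[OF that(1) YG] by simp
        ultimately have "adjeq (g W) z" using zL gG[OF that(1)] unfolding Lset_def by blast
        then show ?thesis using ae[OF that(1) Z(1)] Z(2) by simp
      qed
      then have "Z \<in> Lset X Y" unfolding Lset_def using Z by blast
      then show "z \<in> g ` Lset X Y" using Z by blast
    qed
  qed
  then have "g ` p = pencil_set sm (g X \<inter> g Y) (sum_space (g X) (g Y))"
    using Lchar[OF d XG YG xy] Lchar[OF d gG[OF XG] gG[OF YG] gxy] pe by simp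
  then show ?thesis using pencil_of_adj[OF gG[OF XG] gG[OF YG] gxy] by simp
qed

lemma coll_adj:
  assumes bij: "bij_betw g (Grass sm) (Grass sm)"
    and pm: "\<forall>p\<in>pencils sm. g ` p \<in> pencils sm"
    and XG: "X \<in> Grass sm" and YG: "Y \<in> Grass sm" and xy: "adjacent sm X Y"
  shows "adjacent sm (g X) (g Y)"
proof -
  have X: "subspace sm X" and Y: "subspace sm Y" using XG YG Grass_sub by auto
  let ?p = "pencil_set sm (X \<inter> Y) (sum_space X Y)"
  have p: "?p \<in> pencils sm" using pencil_of_adj[OF XG YG xy] .
  have "X \<in> ?p" "Y \<in> ?p" using adj_plane[OF X Y xy] XG YG unfolding pencil_set_def by auto
  moreover have "g X \<noteq> g Y" using adj_neq[OF X Y xy] bij XG YG unfolding bij_betw_def inj_on_def by blast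
  ultimately show ?thesis using pencil_adj[OF pm[rule_format, OF p]] by blast
qed

end

theorem corollary5p1:
  fixes sm :: "'k::division_ring \<Rightarrow> 'v::ab_group_add \<Rightarrow> 'v"
    and \<kappa> :: "'v set \<Rightarrow> 'v set"
  assumes "left_vector_space sm"
    and "dim_gt_2 sm"
    and "Grass sm \<noteq> {}"
    and "bij_betw \<kappa> (Grass sm) (Grass sm)"
  shows "(\<forall>X\<in>Grass sm. \<forall>Y\<in>Grass sm. adjacent sm X Y \<longleftrightarrow> adjacent sm (\<kappa> X) (\<kappa> Y))
     \<longleftrightarrow> ((\<forall>p\<in>pencils sm. \<kappa> ` p \<in> pencils sm) \<and>
          (\<forall>p\<in>pencils sm. inv_into (Grass sm) \<kappa> ` p \<in> pencils sm))"
proof -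
  interpret lvs sm using assms(1) by unfold_locales
  have bij: "bij_betw \<kappa> (Grass sm) (Grass sm)" by fact
  have bij2: "bij_betw (inv_into (Grass sm) \<kappa>) (Grass sm) (Grass sm)"
    using bij_betw_inv_into[OF bij] .
  have inj: "inj_on \<kappa> (Grass sm)" using bij unfolding bij_betw_def by blast
  have kG: "\<kappa> X \<in> Grass sm" if "X \<in> Grass sm" for X using bij that bij_betwE by blast
  have iG: "inv_into (Grass sm) \<kappa> X \<in> Grass sm" if "X \<in> Grass sm" for X using bij2 that bij_betwE by blast
  have ik: "inv_into (Grass sm) \<kappa> (\<kappa> X) = X" if "X \<in> Grass sm" for X using inv_into_f_f[OF inj that] .
  have ki: "\<kappa> (inv_into (Grass sm) \<kappa> X) = X" if "X \<in> Grass sm" for X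
    using f_inv_into_f[of X \<kappa> "Grass sm"] that bij unfolding bij_betw_def by blast
  show ?thesis
  proof
    assume adj: "\<forall>X\<in>Grass sm. \<forall>Y\<in>Grass sm. adjacent sm X Y \<longleftrightarrow> adjacent sm (\<kappa> X) (\<kappa> Y)"
    have adj2: "\<forall>X\<in>Grass sm. \<forall>Y\<in>Grass sm. adjacent sm X Y \<longleftrightarrow>
        adjacent sm (inv_into (Grass sm) \<kappa> X) (inv_into (Grass sm) \<kappa> Y)"
    proof (intro ballI)
      fix X Y assume "X \<in> Grass sm" "Y \<in> Grass sm"
      then show "adjacent sm X Y \<longleftrightarrow> adjacent sm (inv_into (Grass sm) \<kappa> X) (inv_into (Grass sm) \<kappa> Y)"
        using adj[rule_format, OF iG iG, of X Y] ki by simp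
    qed
    show "(\<forall>p\<in>pencils sm. \<kappa> ` p \<in> pencils sm) \<and>
          (\<forall>p\<in>pencils sm. inv_into (Grass sm) \<kappa> ` p \<in> pencils sm)"
      using aut_pencils[OF assms(2) bij adj] aut_pencils[OF assms(2) bij2 adj2] by blast
  next
    assume pm: "(\<forall>p\<in>pencils sm. \<kappa> ` p \<in> pencils sm) \<and>
          (\<forall>p\<in>pencils sm. inv_into (Grass sm) \<kappa> ` p \<in> pencils sm)"
    show "\<forall>X\<in>Grass sm. \<forall>Y\<in>Grass sm. adjacent sm X Y \<longleftrightarrow> adjacent sm (\<kappa> X) (\<kappa> Y)"
    proof (intro ballI iffI)
      fix X Y assume "X \<in> Grass sm" "Y \<in> Grass sm" "adjacent sm X Y"
      then show "adjacent sm (\<kappa> X) (\<kappa> Y)" using coll_adj[OF bij] pm by blast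
    next
      fix X Y assume G: "X \<in> Grass sm" "Y \<in> Grass sm" and a: "adjacent sm (\<kappa> X) (\<kappa> Y)"
      have "adjacent sm (inv_into (Grass sm) \<kappa> (\<kappa> X)) (inv_into (Grass sm) \<kappa> (\<kappa> Y))"
        using coll_adj[OF bij2 _ kG[OF G(1)] kG[OF G(2)] a] pm by blast
      then show "adjacent sm X Y" using ik G by simp
    qed
  qed
qed


end
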